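(* Let $W\colon \mathrm{GL}^+(3)\to\mathbb{R}$ be a differentiable stored energy density, where $\mathrm{GL}^+(3)=\{X\in\mathbb{R}^{3\times 3}: \det X>0\}$, and let $S_1(F)=DW(F)$ denote its first Piola–Kirchhoff stress tensor. Assume $W$ is strictly rank-one convex in the monotonicity sense: for every $F\in\mathrm{GL}^+(3)$ and all $\xi,\eta\in\mathbb{R}^3$ with $\xi\otimes\eta\neq 0$ and $F+\xi\otimes\eta\in\mathrm{GL}^+(3)$, $$\langle S_1(F+\xi\otimes\eta)-S_1(F),\,\xi\otimes\eta\rangle_{\mathbb{R}^{3\times3}}>0.$$ Define the Cauchy stress $\sigma\colon\mathrm{GL}^+(3)\to\mathbb{R}^{3\times3}$ by $\sigma(F)=S_1(F)\,(\mathrm{Cof}\,F)^{-1}$. Then $\sigma$ is rank-one injective at every $F\in\mathrm{GL}^+(3)$: if $F\in\mathrm{GL}^+(3)$, $\xi,\eta\in\mathbb{R}^3$ with $F+\xi\otimes\eta\in\mathrm{GL}^+(3)$ and $\sigma(F+\xi\otimes\eta)=\sigma(F)$, then $\xi\otimes\eta=0$.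
   Context: $\langle X,Y\rangle_{\mathbb{R}^{3\times3}}=\mathrm{tr}(X^TY)$ is the Frobenius inner product; $\xi\otimes\eta$ is the dyadic product, the matrix with entries $\xi_i\eta_j$; $\mathrm{Cof}\,F=(\det F)\,F^{-T}$ is the cofactor matrix. A stress tensor $S$ is called rank-one injective at $F$ if $S(F+\xi\otimes\eta)=S(F)$ holds only for $\xi\otimes\eta=0$. *)

theory Defs
  imports "HOL-Analysis.Analysis"
begin

text \<open>3x3 real matrices are represented as real^3^3; the inner product on this
type is the Frobenius inner product tr(X^T Y).\<close>

definition GLp3 :: "(real^3^3) set" where
  "GLp3 = {X. det X > 0}"

definition dyad :: "real^3 \<Rightarrow> real^3 \<Rightarrow> real^3^3" where
  "dyad \<xi> \<eta> = (\<chi> i j. \<xi> $ i * \<eta> $ j)"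

definition Cof :: "real^3^3 \<Rightarrow> real^3^3" where
  "Cof F = det F *\<^sub>R matrix_inv (transpose F)"

definition cauchy_stress :: "(real^3^3 \<Rightarrow> real^3^3) \<Rightarrow> real^3^3 \<Rightarrow> real^3^3" where
  "cauchy_stress S1 F = S1 F ** matrix_inv (Cof F)"

end

theory Submission
  imports Defs
begin

lemma inv_both:
  fixes A :: "real^3^3"
  assumes "invertible A"
  shows "A ** matrix_inv A = mat 1" "matrix_inv A ** A = mat 1"
proof -
  have "\<exists>A'. A ** A' = mat 1 \<and> A' ** A = mat 1" using assms by (simp add: invertible_def)
  from someI_ex[OF this] show "A ** matrix_inv A = mat 1" "matrix_inv A ** A = mat 1"
    by (simp_all add: matrix_inv_def)
qed

lemma inv_inv: fixes A :: "real^3^3"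
  assumes "invertible A" shows "invertible (matrix_inv A)"
  using inv_both[OF assms] unfolding invertible_def by blast

lemma cof_inv: fixes X :: "real^3^3"
  assumes "det X \<noteq> 0" shows "invertible (Cof X)"
proof -
  have "invertible (transpose X)" using assms by (simp add: invertible_det_nz)
  then show ?thesis unfolding Cof_def using assms by (intro scalar_invertible inv_inv)
qed

lemma cof_eq: fixes X :: "real^3^3"
  assumes "det X \<noteq> 0" shows "transpose X *v (Cof X *v v) = det X *\<^sub>R v"
proof -
  have "invertible (transpose X)" using assms by (simp add: invertible_det_nz)
  then show ?thesis
  proof -
    have "transpose X *v (Cof X *v v) = (transpose X ** Cof X) *v v" by (simp add: matrix_vector_mul_assoc)
    also have "transpose X ** Cof X = det X *\<^sub>R (transpose X ** matrix_inv (transpose X))"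
      unfolding Cof_def by (simp add: matrix_matrix_mult_def sum_distrib_left mult_ac vec_eq_iff)
    finally show ?thesis using inv_both(1)[OF \<open>invertible (transpose X)\<close>]
      by (simp add: scaleR_matrix_vector_assoc[symmetric])
  qed
qed

lemma inner_dyad: "(A::real^3^3) \<bullet> dyad a b = a \<bullet> (A *v b)"
  by (simp add: inner_vec_def dyad_def matrix_vector_mult_def sum_distrib_left mult_ac)

lemma det_id_dyad: "det (mat 1 + dyad (u::real^3) v) = 1 + u \<bullet> v"
  by (simp add: det_3 mat_def dyad_def inner_vec_def sum_3) algebra

lemma det_lemma: fixes F :: "real^3^3"
  assumes "det F \<noteq> 0"
  shows "det (F + dyad \<xi> \<eta>) = det F + \<xi> \<bullet> (Cof F *v \<eta>)"
proof -
  have iF: "invertible F" "invertible (transpose F)" using assms by (simp_all add: invertible_det_nz)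
  define u where "u = matrix_inv F *v \<xi>"
  have xu: "\<xi> = F *v u" unfolding u_def using inv_both(1)[OF iF(1)]
    by (metis matrix_vector_mul_assoc matrix_vector_mul_lid)
  have "F ** dyad u \<eta> = dyad (F *v u) \<eta>"
    by (simp add: dyad_def matrix_matrix_mult_def matrix_vector_mult_def vec_eq_iff sum_distrib_left mult_ac)
  then have "F + dyad \<xi> \<eta> = F ** (mat 1 + dyad u \<eta>)"
    by (simp add: xu matrix_add_ldistrib)
  then have d1: "det (F + dyad \<xi> \<eta>) = det F * (1 + u \<bullet> \<eta>)"
    by (simp add: det_mul det_id_dyad)
  have "\<xi> \<bullet> (Cof F *v \<eta>) = u \<bullet> (transpose F *v (Cof F *v \<eta>))"
    by (metis xu dot_lmul_matrix vector_transpose_matrix)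
  also have "\<dots> = det F * (u \<bullet> \<eta>)" using cof_eq[OF assms] by simp
  finally show ?thesis using d1 by (simp add: algebra_simps)
qed

lemma cof_dyad: fixes F :: "real^3^3"
  assumes "det F \<noteq> 0" "det (F + dyad \<xi> \<eta>) \<noteq> 0"
  shows "Cof (F + dyad \<xi> \<eta>) *v \<eta> = Cof F *v \<eta>"
proof -
  let ?G = "F + dyad \<xi> \<eta>"
  let ?v = "Cof F *v \<eta>"
  have tH: "transpose (dyad \<xi> \<eta>) *v ?v = (\<xi> \<bullet> ?v) *\<^sub>R \<eta>"
    by (simp add: dyad_def transpose_def matrix_vector_mult_def vec_eq_iff inner_vec_def sum_distrib_left mult_ac)
  have "transpose ?G *v ?v = transpose F *v ?v + transpose (dyad \<xi> \<eta>) *v ?v"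
    by (simp add: transpose_def matrix_vector_mult_def vec_eq_iff sum.distrib algebra_simps)
  also have "\<dots> = det ?G *\<^sub>R \<eta>" using cof_eq[OF assms(1)] tH det_lemma[OF assms(1)]
    by (simp add: algebra_simps)
  also have "\<dots> = transpose ?G *v (Cof ?G *v \<eta>)" using cof_eq[OF assms(2)] by simp
  finally have "transpose ?G *v ?v = transpose ?G *v (Cof ?G *v \<eta>)" .
  moreover have "invertible (transpose ?G)" using assms by (simp add: invertible_det_nz)
  ultimately show ?thesis using inj_matrix_vector_mult by (metis injD)
qed

lemma S_repr: fixes X :: "real^3^3"
  assumes "det X \<noteq> 0" shows "S1 X = cauchy_stress S1 X ** Cof X"
  using inv_both(2)[OF cof_inv[OF assms]] unfolding cauchy_stress_def
  by (simp add: matrix_mul_assoc[symmetric])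

lemma mat_diff_ldistrib: "(A::real^3^3) ** (B - C) = A ** B - A ** C"
  by (simp add: matrix_matrix_mult_def vec_eq_iff sum_subtractf right_diff_distrib)

theorem mainTheorem1:
  fixes W :: "real^3^3 \<Rightarrow> real" and S1 :: "real^3^3 \<Rightarrow> real^3^3"
    and F :: "real^3^3" and \<xi> \<eta> :: "real^3"
  assumes deriv: "\<And>X. X \<in> GLp3 \<Longrightarrow> (W has_derivative (\<lambda>H. S1 X \<bullet> H)) (at X)"
    and src: "\<And>X a b. X \<in> GLp3 \<Longrightarrow> dyad a b \<noteq> 0 \<Longrightarrow> X + dyad a b \<in> GLp3 \<Longrightarrow>
        (S1 (X + dyad a b) - S1 X) \<bullet> dyad a b > 0"
    and F: "F \<in> GLp3"
    and F1: "F + dyad \<xi> \<eta> \<in> GLp3"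
    and eq: "cauchy_stress S1 (F + dyad \<xi> \<eta>) = cauchy_stress S1 F"
  shows "dyad \<xi> \<eta> = 0"
proof (rule ccontr)
  assume ne: "dyad \<xi> \<eta> \<noteq> 0"
  let ?G = "F + dyad \<xi> \<eta>"
  let ?s = "cauchy_stress S1 F"
  have dF: "det F \<noteq> 0" and dG: "det ?G \<noteq> 0" using F F1 by (auto simp: GLp3_def)
  have "S1 ?G - S1 F = ?s ** (Cof ?G - Cof F)"
    using S_repr[OF dF, of S1] S_repr[OF dG, of S1] eq
    by (simp add: mat_diff_ldistrib)
  then have "(S1 ?G - S1 F) \<bullet> dyad \<xi> \<eta> = \<xi> \<bullet> (?s *v (Cof ?G *v \<eta> - Cof F *v \<eta>))"
    by (simp add: inner_dyad matrix_vector_mul_assoc[symmetric] matrix_vector_mult_diff_rdistrib)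
  also have "\<dots> = 0" using cof_dyad[OF dF dG] by simp
  finally show False using src[OF F ne F1] by simp
qed

end
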